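(* Let $P=(X,\leq)$ be a partially ordered set whose incomparability graph is locally finite. Then there exist a partition of $X$ into antichains and a chain $C\subseteq X$ of $P$ such that $C$ intersects every member of the partition.
   Context: The incomparability graph of a poset $P=(X,\leq)$ is the graph with vertex set $X$ whose edges are the pairs $\{u,v\}$ of distinct elements that are incomparable in $P$ (neither $u\leq v$ nor $v\leq u$). A graph is locally finite if every vertex is adjacent to finitely many vertices. An antichain is a set of pairwise incomparable elements; a chain is a set of pairwise comparable elements. *)

theory Defs
  imports Main "HOL-Library.Disjoint_Sets"
begin

text \<open>A poset is a carrier X with a relation r satisfying partial_order_on X r;
  only pairs inside X matter.\<close>

definition incomparable :: "'a rel \<Rightarrow> 'a \<Rightarrow> 'a \<Rightarrow> bool" where
  "incomparable r x y \<longleftrightarrow> (x, y) \<notin> r \<and> (y, x) \<notin> r"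

definition incomp_nbhd :: "'a set \<Rightarrow> 'a rel \<Rightarrow> 'a \<Rightarrow> 'a set" where
  "incomp_nbhd X r x = {y \<in> X. y \<noteq> x \<and> incomparable r x y}"

definition incomp_graph_locally_finite :: "'a set \<Rightarrow> 'a rel \<Rightarrow> bool" where
  "incomp_graph_locally_finite X r \<longleftrightarrow> (\<forall>x\<in>X. finite (incomp_nbhd X r x))"

definition antichain_in :: "'a set \<Rightarrow> 'a rel \<Rightarrow> 'a set \<Rightarrow> bool" where
  "antichain_in X r A \<longleftrightarrow> A \<subseteq> X \<and> (\<forall>x\<in>A. \<forall>y\<in>A. x \<noteq> y \<longrightarrow> incomparable r x y)"

definition chain_in :: "'a set \<Rightarrow> 'a rel \<Rightarrow> 'a set \<Rightarrow> bool" where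
  "chain_in X r C \<longleftrightarrow> C \<subseteq> X \<and> (\<forall>x\<in>C. \<forall>y\<in>C. (x, y) \<in> r \<or> (y, x) \<in> r)"

end

theory Submission
  imports Defs "HOL-Analysis.Analysis"
begin

lemma finite_min_rel:
  assumes "trans r" "antisym r" "finite S" "S \<noteq> {}"
  shows "\<exists>m\<in>S. \<forall>z\<in>S. (z,m)\<in>r \<longrightarrow> z = m"
  using assms(3,4)
proof (induction rule: finite_ne_induct)
  case (singleton x) show ?case by simp
next
  case (insert x F)
  then obtain m where m: "m\<in>F" "\<forall>z\<in>F. (z,m)\<in>r \<longrightarrow> z=m" by blast
  show ?case
  proof (cases "(x,m)\<in>r")
    case True
    show ?thesis
    proof (rule bexI[of _ x])
      show "\<forall>z\<in>insert x F. (z,x)\<in>r \<longrightarrow> z = x"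
      proof (intro ballI impI)
        fix z assume z: "z \<in> insert x F" "(z,x)\<in>r"
        show "z = x"
        proof (cases "z = x")
          case False
          then have "z\<in>F" using z by auto
          have "(z,m)\<in>r" using z True assms(1) by (meson transD)
          then have "z = m" using m \<open>z\<in>F\<close> by auto
          then show ?thesis using z True assms(2) by (auto dest: antisymD)
        qed simp
      qed
    qed simp
  next
    case False
    then show ?thesis using m insert.hyps by (intro bexI[of _ m]) auto
  qed
qed

lemma finite_sol:
  assumes po: "partial_order_on X r" and "finite Y" "Y \<subseteq> X"
  shows "\<exists>f. (\<forall>x\<in>Y. f x \<in> Y \<and> (f x = x \<or> incomparable r x (f x)) \<and> f (f x) = f x)
            \<and> (\<forall>x\<in>Y. \<forall>y\<in>Y. f x = x \<longrightarrow> f y = y \<longrightarrow> (x,y)\<in>r \<or> (y,x)\<in>r)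
            \<and> (\<forall>x\<in>Y. \<forall>y\<in>Y. x \<noteq> y \<longrightarrow> f x = f y \<longrightarrow> incomparable r x y)"
  using assms(2,3)
proof (induction Y rule: finite_psubset_induct)
  case (psubset Y)
  have refl: "\<And>x. x \<in> X \<Longrightarrow> (x,x) \<in> r" and tr: "trans r" and an: "antisym r"
    using partial_order_onD[OF po] by (auto simp: refl_on_def)
  show ?case
  proof (cases "Y = {}")
    case True then show ?thesis by auto
  next
    case False
    define M where "M = {m\<in>Y. \<forall>z\<in>Y. (z,m)\<in>r \<longrightarrow> z = m}"
    have Mne: "M \<noteq> {}" using finite_min_rel[OF tr an psubset.hyps(1) False] unfolding M_def by auto
    have MY: "M \<subseteq> Y" unfolding M_def by auto
    have Manti: "\<forall>x\<in>M. \<forall>y\<in>M. x\<noteq>y \<longrightarrow> incomparable r x y"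
      unfolding M_def incomparable_def by blast
    define Y' where "Y' = Y - M"
    have "Y' \<subset> Y" using Mne MY unfolding Y'_def by blast
    moreover have "Y' \<subseteq> X" using psubset.prems unfolding Y'_def by blast
    ultimately have IH: "\<exists>f. (\<forall>x\<in>Y'. f x \<in> Y' \<and> (f x = x \<or> incomparable r x (f x)) \<and> f (f x) = f x)
            \<and> (\<forall>x\<in>Y'. \<forall>y\<in>Y'. f x = x \<longrightarrow> f y = y \<longrightarrow> (x,y)\<in>r \<or> (y,x)\<in>r)
            \<and> (\<forall>x\<in>Y'. \<forall>y\<in>Y'. x \<noteq> y \<longrightarrow> f x = f y \<longrightarrow> incomparable r x y)"
      by (rule psubset.IH)
    then obtain f' where f'1: "\<forall>x\<in>Y'. f' x \<in> Y' \<and> (f' x = x \<or> incomparable r x (f' x)) \<and> f' (f' x) = f' x"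
      and f'2: "\<forall>x\<in>Y'. \<forall>y\<in>Y'. f' x = x \<longrightarrow> f' y = y \<longrightarrow> (x,y)\<in>r \<or> (y,x)\<in>r"
      and f'3: "\<forall>x\<in>Y'. \<forall>y\<in>Y'. x \<noteq> y \<longrightarrow> f' x = f' y \<longrightarrow> incomparable r x y"
      by (elim exE conjE) (rule that; assumption)
    show ?thesis
    proof (cases "Y' = {}")
      case True
      obtain m where m: "m \<in> M" using Mne by blast
      have YM: "Y = M" using True MY unfolding Y'_def by blast
      show ?thesis
        apply (rule exI[of _ "\<lambda>x. m"])
        using m YM Manti refl psubset.prems by auto
    next
      case False
      define C' where "C' = {y\<in>Y'. f' y = y}"
      obtain y0 where "y0 \<in> Y'" using False by blast
      then have "f' y0 \<in> C'" using f'1 unfolding C'_def by auto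
      then have "C' \<noteq> {}" by blast
      moreover have "finite C'" using psubset.hyps(1) unfolding C'_def Y'_def by auto
      ultimately obtain c where c: "c \<in> C'" "\<forall>z\<in>C'. (z,c)\<in>r \<longrightarrow> z = c"
        using finite_min_rel[OF tr an, of C'] by auto
      have cY: "c \<in> Y" "c \<notin> M" using c(1) unfolding C'_def Y'_def by auto
      then obtain z where z: "z \<in> Y" "(z,c) \<in> r" "z \<noteq> c" unfolding M_def by auto
      define W where "W = {w\<in>Y. (w,c)\<in>r \<and> w \<noteq> c}"
      have W1: "W \<noteq> {}" using z unfolding W_def by auto
      have W2: "finite W" using psubset.hyps(1) unfolding W_def by auto
      obtain m where m: "m \<in> W" "\<forall>z\<in>W. (z,m)\<in>r \<longrightarrow> z = m"
        using finite_min_rel[OF tr an W2 W1] by blast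
      have mc: "(m,c) \<in> r" "m \<in> Y" "m \<noteq> c" using m(1) unfolding W_def by auto
      have mM: "m \<in> M" unfolding M_def
      proof (intro CollectI conjI ballI impI)
        show "m \<in> Y" by fact
        fix z assume z: "z \<in> Y" "(z,m) \<in> r"
        have "(z,c) \<in> r" using z mc tr by (meson transD)
        moreover have "z \<noteq> c" using z mc an by (auto dest: antisymD)
        ultimately show "z = m" using m z unfolding W_def by auto
      qed
      have cle: "\<forall>y\<in>C'. (c,y)\<in>r"
      proof
        fix y assume y: "y \<in> C'"
        then have "(c,y)\<in>r \<or> (y,c)\<in>r" using f'2 c(1) unfolding C'_def by auto
        then show "(c,y)\<in>r" using c y refl cY psubset.prems by auto
      qed
      have mle: "\<forall>y\<in>C'. (m,y)\<in>r" using cle mc tr by (meson transD)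
      define f where "f = (\<lambda>x. if x \<in> M then m else f' x)"
      have P1: "\<forall>x\<in>Y. f x \<in> Y \<and> (f x = x \<or> incomparable r x (f x)) \<and> f (f x) = f x"
      proof
        fix x assume x: "x \<in> Y"
        show "f x \<in> Y \<and> (f x = x \<or> incomparable r x (f x)) \<and> f (f x) = f x"
        proof (cases "x \<in> M")
          case True then show ?thesis using mM mc Manti unfolding f_def by auto
        next
          case False
          then have "x \<in> Y'" using x unfolding Y'_def by auto
          then show ?thesis using f'1 False unfolding f_def Y'_def by auto
        qed
      qed
      have P2: "\<forall>x\<in>Y. \<forall>y\<in>Y. f x = x \<longrightarrow> f y = y \<longrightarrow> (x,y)\<in>r \<or> (y,x)\<in>r"
      proof (intro ballI impI)
        fix x y assume xy: "x \<in> Y" "y \<in> Y" "f x = x" "f y = y"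
        have fx: "x = m \<or> x \<in> C'" using xy unfolding f_def C'_def Y'_def by (auto split: if_splits)
        have fy: "y = m \<or> y \<in> C'" using xy unfolding f_def C'_def Y'_def by (auto split: if_splits)
        show "(x,y)\<in>r \<or> (y,x)\<in>r"
          using fx fy mle f'2 refl mc psubset.prems unfolding C'_def by blast
      qed
      have P3: "\<forall>x\<in>Y. \<forall>y\<in>Y. x \<noteq> y \<longrightarrow> f x = f y \<longrightarrow> incomparable r x y"
      proof (intro ballI impI)
        fix x y assume xy: "x \<in> Y" "y \<in> Y" "x \<noteq> y" "f x = f y"
        show "incomparable r x y"
        proof (cases "x \<in> M")
          case True
          show ?thesis
          proof (cases "y \<in> M")
            case True then show ?thesis using \<open>x\<in>M\<close> xy Manti by auto
          next
            case False
            then have "y \<in> Y'" using xy unfolding Y'_def by auto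
            then have "f' y \<in> Y'" using f'1 by auto
            then show ?thesis using xy True False mM unfolding f_def Y'_def by auto
          qed
        next
          case False
          then have xY: "x \<in> Y'" using xy unfolding Y'_def by auto
          then have "f' x \<in> Y'" using f'1 by auto
          show ?thesis
          proof (cases "y \<in> M")
            case True then show ?thesis using xy False mM \<open>f' x \<in> Y'\<close> unfolding f_def Y'_def by auto
          next
            case False
            then have "y \<in> Y'" using xy unfolding Y'_def by auto
            then show ?thesis using f'3 xY xy False \<open>x \<notin> M\<close> unfolding f_def by auto
          qed
        qed
      qed
      show ?thesis using P1 P2 P3 by blast
    qed
  qed
qed


lemma closed_local:
  assumes "finite G" "G \<subseteq> I"
    and dep: "\<And>f g. f \<in> PiE I S \<Longrightarrow> g \<in> PiE I S \<Longrightarrow> (\<forall>i\<in>G. f i = g i) \<Longrightarrow> P f \<Longrightarrow> P g"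
  shows "closedin (product_topology (\<lambda>i. discrete_topology (S i)) I) {f \<in> PiE I S. P f}"
proof -
  let ?T = "product_topology (\<lambda>i. discrete_topology (S i)) I"
  have "openin ?T {f \<in> PiE I S. \<not> P f}"
  proof (subst openin_subopen, intro ballI)
    fix f assume f: "f \<in> {f \<in> PiE I S. \<not> P f}"
    let ?N = "(\<Inter>i\<in>G. {g \<in> topspace ?T. g i \<in> {f i}}) \<inter> topspace ?T"
    have "openin ?T ?N"
    proof (rule openin_INT[OF assms(1)])
      fix i assume i: "i \<in> G"
      then have "i \<in> I" using assms(2) by auto
      then have "f i \<in> S i" using f by (auto simp: PiE_iff)
      then show "openin ?T {g \<in> topspace ?T. g i \<in> {f i}}"
        using openin_continuous_map_preimage[OF continuous_map_product_projection[OF \<open>i \<in> I\<close>, of "\<lambda>i. discrete_topology (S i)"], of "{f i}"]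
        by simp
    qed
    moreover have "f \<in> ?N" using f by auto
    moreover have "?N \<subseteq> {f \<in> PiE I S. \<not> P f}"
    proof
      fix g assume g: "g \<in> ?N"
      then have "g \<in> PiE I S" "\<forall>i\<in>G. g i = f i" by auto
      then show "g \<in> {f \<in> PiE I S. \<not> P f}" using dep[of g f] f by auto
    qed
    ultimately show "\<exists>T. openin ?T T \<and> f \<in> T \<and> T \<subseteq> {f \<in> PiE I S. \<not> P f}" by blast
  qed
  moreover have "topspace ?T - {f \<in> PiE I S. P f} = {f \<in> PiE I S. \<not> P f}" by auto
  ultimately show ?thesis unfolding closedin_def by auto
qed

theorem theorem4:
  fixes X :: "'a set" and r :: "'a rel"
  assumes "partial_order_on X r"
    and "incomp_graph_locally_finite X r"
  shows "\<exists>\<P> C. partition_on X \<P> \<and> (\<forall>A\<in>\<P>. antichain_in X r A)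
           \<and> chain_in X r C \<and> (\<forall>A\<in>\<P>. C \<inter> A \<noteq> {})"
proof -
  define S where "S = (\<lambda>x. insert x (incomp_nbhd X r x))"
  have Sfin: "\<And>x. x \<in> X \<Longrightarrow> finite (S x)"
    using assms(2) unfolding S_def incomp_graph_locally_finite_def by auto
  have SX: "\<And>x. x \<in> X \<Longrightarrow> S x \<subseteq> X"
    unfolding S_def incomp_nbhd_def by auto
  define ok where "ok = (\<lambda>F f. (\<forall>x\<in>F. f (f x) = f x)
      \<and> (\<forall>x\<in>F. \<forall>y\<in>F. f x = x \<longrightarrow> f y = y \<longrightarrow> (x,y)\<in>r \<or> (y,x)\<in>r)
      \<and> (\<forall>x\<in>F. \<forall>y\<in>F. x \<noteq> y \<longrightarrow> f x = f y \<longrightarrow> incomparable r x y))"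
  have ok_mono: "ok F f" if "ok G f" "F \<subseteq> G" for F G f
    using that unfolding ok_def by (meson subsetD)
  define T where "T = product_topology (\<lambda>x. discrete_topology (S x)) X"
  define U where "U = (\<lambda>F. {f \<in> PiE X S. ok F f}) ` {F. finite F \<and> F \<subseteq> X}"
  have comp: "compact_space T"
    unfolding T_def compact_space_product_topology
    using Sfin by (simp add: compact_space_discrete_topology)
  have closed: "\<forall>C\<in>U. closedin T C"
  proof
    fix C assume "C \<in> U"
    then obtain F where F: "finite F" "F \<subseteq> X" "C = {f \<in> PiE X S. ok F f}"
      unfolding U_def by auto
    let ?G = "F \<union> (\<Union>x\<in>F. S x)"
    have "finite ?G" using F Sfin by auto
    moreover have "?G \<subseteq> X" using F SX by auto
    moreover have "\<And>f g. f \<in> PiE X S \<Longrightarrow> g \<in> PiE X S \<Longrightarrow> (\<forall>i\<in>?G. f i = g i) \<Longrightarrow> ok F f \<Longrightarrow> ok F g"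
    proof -
      fix f g assume f: "f \<in> PiE X S" and g: "g \<in> PiE X S" and agree: "\<forall>i\<in>?G. f i = g i"
        and okf: "ok F f"
      have fxG: "\<And>x. x \<in> F \<Longrightarrow> f x \<in> ?G" using f F(2) by (auto simp: PiE_iff)
      have eqx: "\<And>x. x \<in> F \<Longrightarrow> g x = f x" using agree by auto
      have eqfx: "\<And>x. x \<in> F \<Longrightarrow> g (f x) = f (f x)" using agree fxG by metis
      show "ok F g" using okf unfolding ok_def using eqx eqfx by auto
    qed
    ultimately have "closedin T {f \<in> PiE X S. ok F f}"
      unfolding T_def by (rule closed_local)
    then show "closedin T C" using F by simp
  qed
  have exist: "\<exists>f \<in> PiE X S. ok G f" if G: "finite G" "G \<subseteq> X" for G
  proof -
    let ?Y = "G \<union> (\<Union>x\<in>G. S x)"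
    have finY: "finite ?Y" using G Sfin by auto
    have YX: "?Y \<subseteq> X" using G SX by auto
    from finite_sol[OF assms(1) finY YX] obtain f0 where
      f1: "\<forall>x\<in>?Y. f0 x \<in> ?Y \<and> (f0 x = x \<or> incomparable r x (f0 x)) \<and> f0 (f0 x) = f0 x"
      and f2: "\<forall>x\<in>?Y. \<forall>y\<in>?Y. f0 x = x \<longrightarrow> f0 y = y \<longrightarrow> (x,y)\<in>r \<or> (y,x)\<in>r"
      and f3: "\<forall>x\<in>?Y. \<forall>y\<in>?Y. x \<noteq> y \<longrightarrow> f0 x = f0 y \<longrightarrow> incomparable r x y"
      by (elim exE conjE) (rule that; assumption)
    define f where "f = (\<lambda>x. if x \<in> ?Y then f0 x else if x \<in> X then x else undefined)"
    have "f \<in> PiE X S"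
    proof (rule PiE_I)
      fix x assume x: "x \<in> X"
      show "f x \<in> S x"
      proof (cases "x \<in> ?Y")
        case True
        then have "f0 x \<in> X" "f0 x = x \<or> incomparable r x (f0 x)" using f1 YX by auto
        then show ?thesis using True unfolding f_def S_def incomp_nbhd_def by auto
      next
        case False then show ?thesis using x unfolding f_def S_def by auto
      qed
    next
      fix x assume "x \<notin> X" then show "f x = undefined" using YX unfolding f_def by auto
    qed
    moreover have "ok G f"
    proof -
      have GY: "\<And>x. x \<in> G \<Longrightarrow> x \<in> ?Y" by blast
      have e1: "\<And>x. x \<in> G \<Longrightarrow> f x = f0 x" unfolding f_def using GY by simp
      have e2: "\<And>x. x \<in> G \<Longrightarrow> f (f0 x) = f0 (f0 x)"
      proof -
        fix x assume "x \<in> G"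
        then have "f0 x \<in> ?Y" using f1 GY by blast
        then show "f (f0 x) = f0 (f0 x)" unfolding f_def by simp
      qed
      show ?thesis unfolding ok_def
      proof (intro conjI ballI impI)
        fix x assume x: "x \<in> G"
        have "f0 (f0 x) = f0 x" using f1 GY[OF x] by blast
        then show "f (f x) = f x" using e1[OF x] e2[OF x] by simp
      next
        fix x y assume xy: "x \<in> G" "y \<in> G" "f x = x" "f y = y"
        then have "f0 x = x" "f0 y = y" using e1 by auto
        then show "(x,y)\<in>r \<or> (y,x)\<in>r" using f2 GY[OF xy(1)] GY[OF xy(2)] by blast
      next
        fix x y assume xy: "x \<in> G" "y \<in> G" "x \<noteq> y" "f x = f y"
        then have "f0 x = f0 y" using e1 by auto
        then show "incomparable r x y" using f3 GY[OF xy(1)] GY[OF xy(2)] xy(3) by blast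
      qed
    qed
    ultimately show ?thesis by blast
  qed
  have fip: "\<forall>\<F>. finite \<F> \<and> \<F> \<subseteq> U \<longrightarrow> \<Inter>\<F> \<noteq> {}"
  proof (intro allI impI)
    fix \<F> assume H: "finite \<F> \<and> \<F> \<subseteq> U"
    have "\<F> \<subseteq> (\<lambda>F. {f \<in> PiE X S. ok F f}) ` {F. finite F \<and> F \<subseteq> X}"
      using H unfolding U_def by simp
    from finite_subset_image[OF conjunct1[OF H] this]
    obtain \<G> where G: "\<G> \<subseteq> {F. finite F \<and> F \<subseteq> X}" "finite \<G>"
      "\<F> = (\<lambda>F. {f \<in> PiE X S. ok F f}) ` \<G>"
      by blast
    have fin: "finite (\<Union>\<G>)" using G(1,2) by (simp add: finite_Union subset_iff)
    have sub: "\<Union>\<G> \<subseteq> X" using G(1) by blast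
    obtain f where f: "f \<in> PiE X S" "ok (\<Union>\<G>) f" using exist[OF fin sub] by blast
    have "f \<in> \<Inter>\<F>"
    proof
      fix C assume "C \<in> \<F>"
      then obtain F where F: "F \<in> \<G>" "C = {f \<in> PiE X S. ok F f}" using G(3) by blast
      have "F \<subseteq> \<Union>\<G>" using F(1) by blast
      then have "ok F f" using ok_mono[OF f(2)] by blast
      then show "f \<in> C" using f(1) F(2) by simp
    qed
    then show "\<Inter>\<F> \<noteq> {}" by blast
  qed
  have "\<Inter>U \<noteq> {}"
    using comp[unfolded compact_space_fip, rule_format, OF conjI[OF closed fip]] .
  then obtain f where f: "f \<in> \<Inter>U" by blast
  have okall': "f \<in> PiE X S \<and> ok F f" if "finite F" "F \<subseteq> X" for F
  proof -
    have "{f \<in> PiE X S. ok F f} \<in> U" unfolding U_def using that by blast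
    from InterD[OF f this] show ?thesis by simp
  qed
  have okall: "ok F f" if "finite F" "F \<subseteq> X" for F using okall'[OF that] by simp
  have fP: "f \<in> PiE X S" using okall'[of "{}"] by simp
  have fX: "\<And>x. x \<in> X \<Longrightarrow> f x \<in> X"
  proof -
    fix x assume x: "x \<in> X"
    have "f x \<in> S x" using PiE_mem[OF fP x] .
    then show "f x \<in> X" using SX[OF x] by blast
  qed
  have A1: "\<And>x. x \<in> X \<Longrightarrow> f (f x) = f x"
  proof -
    fix x assume x: "x \<in> X"
    have "ok {x} f" using okall[of "{x}"] x by simp
    then show "f (f x) = f x" unfolding ok_def by simp
  qed
  have A2: "\<And>x y. x \<in> X \<Longrightarrow> y \<in> X \<Longrightarrow> f x = x \<Longrightarrow> f y = y \<Longrightarrow> (x,y)\<in>r \<or> (y,x)\<in>r"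
  proof -
    fix x y assume "x \<in> X" "y \<in> X" "f x = x" "f y = y"
    moreover have "ok {x,y} f" using okall[of "{x,y}"] calculation by simp
    ultimately show "(x,y)\<in>r \<or> (y,x)\<in>r" unfolding ok_def by simp
  qed
  have A3: "\<And>x y. x \<in> X \<Longrightarrow> y \<in> X \<Longrightarrow> x \<noteq> y \<Longrightarrow> f x = f y \<Longrightarrow> incomparable r x y"
  proof -
    fix x y assume "x \<in> X" "y \<in> X" "x \<noteq> y" "f x = f y"
    moreover have "ok {x,y} f" using okall[of "{x,y}"] calculation by simp
    ultimately show "incomparable r x y" unfolding ok_def by simp
  qed
  define C where "C = {x \<in> X. f x = x}"
  define fib where "fib = (\<lambda>c. {y \<in> X. f y = c})"
  define P where "P = fib ` C"
  have cover: "\<Union>P = X"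
  proof
    show "\<Union>P \<subseteq> X" unfolding P_def fib_def by blast
    show "X \<subseteq> \<Union>P"
    proof
      fix x assume x: "x \<in> X"
      then have fx: "f x \<in> C" using fX A1 unfolding C_def by blast
      have "x \<in> fib (f x)" using x unfolding fib_def by simp
      then show "x \<in> \<Union>P" using fx unfolding P_def by blast
    qed
  qed
  have cin: "\<And>c. c \<in> C \<Longrightarrow> c \<in> fib c" unfolding C_def fib_def by simp
  have disj: "disjoint P"
    unfolding disjoint_def
  proof (intro ballI impI)
    fix A B assume AB: "A \<in> P" "B \<in> P" "A \<noteq> B"
    then obtain a b where "A = fib a" "B = fib b" unfolding P_def by blast
    moreover have "a \<noteq> b" using AB(3) calculation by blast
    ultimately show "A \<inter> B = {}" unfolding fib_def by auto
  qed
  have ne: "{} \<notin> P" using cin unfolding P_def by blast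
  have p1: "partition_on X P" unfolding partition_on_def using cover disj ne by simp
  have p2: "\<forall>A\<in>P. antichain_in X r A"
  proof
    fix A assume "A \<in> P"
    then obtain c where c: "A = fib c" unfolding P_def by blast
    show "antichain_in X r A" unfolding antichain_in_def
    proof (intro conjI ballI impI)
      show "A \<subseteq> X" unfolding c fib_def by blast
      fix x y assume "x \<in> A" "y \<in> A" "x \<noteq> y"
      then show "incomparable r x y" using A3 unfolding c fib_def by simp
    qed
  qed
  have p3: "chain_in X r C" unfolding chain_in_def
  proof (intro conjI ballI)
    show "C \<subseteq> X" unfolding C_def by blast
    fix x y assume "x \<in> C" "y \<in> C"
    then show "(x, y) \<in> r \<or> (y, x) \<in> r" using A2 unfolding C_def by simp
  qed
  have p4: "\<forall>A\<in>P. C \<inter> A \<noteq> {}"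
  proof
    fix A assume "A \<in> P"
    then obtain c where c: "c \<in> C" "A = fib c" unfolding P_def by blast
    then have "c \<in> C \<inter> A" using cin by simp
    then show "C \<inter> A \<noteq> {}" by blast
  qed
  show ?thesis by (intro exI[of _ P] exI[of _ C] conjI p1 p2 p3 p4)
qed

end
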